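(* For every $n\in\mathbb{N}$, the boolean quadric polytope $\mathrm{BQP}(n)$ is affinely equivalent to some face of the linear ordering polytope $\mathrm{LOP}(2n)$.
   Context: The boolean quadric polytope $\mathrm{BQP}(n)$ is the convex hull of all vectors $\mathbf{x}=(x_{ij})_{1\le i\le j\le n}\in\{0,1\}^{n(n+1)/2}$ satisfying $x_{ij}=x_{ii}x_{jj}$ for all $1\le i<j\le n$. For $m\in\mathbb{N}$, a linear order on $[m]=\{1,\dots,m\}$ is a set $L$ of ordered pairs $(i,j)$, $i\neq j$, such that for each pair $i\neq j$ exactly one of $(i,j),(j,i)$ lies in $L$, and $L$ is transitive ($(i,j),(j,k)\in L\Rightarrow (i,k)\in L$). Its characteristic vector $\mathbf{y}\in\{0,1\}^{m(m-1)/2}$ has coordinates $y_{ij}$, $1\le i<j\le m$, with $y_{ij}=1$ if $(i,j)\in L$ and $y_{ij}=0$ if $(j,i)\in L$. The linear ordering polytope $\mathrm{LOP}(m)$ is the convex hull of all such characteristic vectors. A hyperplane $H$ is supporting for a polytope $P$ if $P\cap H\neq\emptyset$ and $P$ lies entirely on one side of $H$; a face of $P$ is the intersection of $P$ with one or several supporting hyperplanes. Two polytopes $P,Q$ are affinely equivalent if there is an invertible affine map $\alpha$ with $\alpha(P)=Q$ (equivalently, an affine bijection between them). *)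

theory Defs
  imports Complex_Main
begin

(* Vectors with coordinates indexed by a finite set I of pairs of naturals are
   represented as functions  nat \<times> nat \<Rightarrow> real  that vanish outside I. *)

type_synonym vect = "nat \<times> nat \<Rightarrow> real"

definition bqp_idx :: "nat \<Rightarrow> (nat \<times> nat) set" where
  "bqp_idx n = {(i, j). 1 \<le> i \<and> i \<le> j \<and> j \<le> n}"

definition lop_idx :: "nat \<Rightarrow> (nat \<times> nat) set" where
  "lop_idx m = {(i, j). 1 \<le> i \<and> i < j \<and> j \<le> m}"

definition conv_hull_fin :: "vect set \<Rightarrow> vect set" where
  "conv_hull_fin S = {x. \<exists>c. (\<forall>v\<in>S. 0 \<le> c v) \<and> sum c S = 1 \<and>
                          x = (\<lambda>k. \<Sum>v\<in>S. c v * v k)}"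

definition bqp_vertices :: "nat \<Rightarrow> vect set" where
  "bqp_vertices n = {x. (\<forall>k. k \<notin> bqp_idx n \<longrightarrow> x k = 0) \<and>
                        (\<forall>k\<in>bqp_idx n. x k \<in> {0, 1}) \<and>
                        (\<forall>i j. 1 \<le> i \<longrightarrow> i < j \<longrightarrow> j \<le> n \<longrightarrow> x (i, j) = x (i, i) * x (j, j))}"

definition BQP :: "nat \<Rightarrow> vect set" where
  "BQP n = conv_hull_fin (bqp_vertices n)"

definition lin_order :: "nat \<Rightarrow> (nat \<times> nat) set \<Rightarrow> bool" where
  "lin_order m L \<longleftrightarrow> L \<subseteq> {1..m} \<times> {1..m} \<and> (\<forall>(i, j)\<in>L. i \<noteq> j) \<and>
     (\<forall>i\<in>{1..m}. \<forall>j\<in>{1..m}. i \<noteq> j \<longrightarrow> ((i, j) \<in> L \<longleftrightarrow> (j, i) \<notin> L)) \<and>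
     trans L"

definition char_vec :: "nat \<Rightarrow> (nat \<times> nat) set \<Rightarrow> vect" where
  "char_vec m L = (\<lambda>k. if k \<in> lop_idx m \<and> k \<in> L then 1 else 0)"

definition lop_vertices :: "nat \<Rightarrow> vect set" where
  "lop_vertices m = char_vec m ` {L. lin_order m L}"

definition LOP :: "nat \<Rightarrow> vect set" where
  "LOP m = conv_hull_fin (lop_vertices m)"

definition hyperplane_on :: "(nat \<times> nat) set \<Rightarrow> vect \<Rightarrow> real \<Rightarrow> vect set" where
  "hyperplane_on I a b = {x. (\<Sum>k\<in>I. a k * x k) = b}"

definition supporting_on :: "(nat \<times> nat) set \<Rightarrow> vect set \<Rightarrow> vect \<Rightarrow> real \<Rightarrow> bool" where
  "supporting_on I P a b \<longleftrightarrow> P \<inter> hyperplane_on I a b \<noteq> {} \<and>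
     ((\<forall>x\<in>P. (\<Sum>k\<in>I. a k * x k) \<le> b) \<or> (\<forall>x\<in>P. (\<Sum>k\<in>I. a k * x k) \<ge> b))"

definition is_face_on :: "(nat \<times> nat) set \<Rightarrow> vect set \<Rightarrow> vect set \<Rightarrow> bool" where
  "is_face_on I P F \<longleftrightarrow> (\<exists>Hs. finite Hs \<and> Hs \<noteq> {} \<and>
      (\<forall>(a, b)\<in>Hs. supporting_on I P a b) \<and>
      F = P \<inter> (\<Inter>(a, b)\<in>Hs. hyperplane_on I a b))"

definition aff_equiv_on :: "(nat \<times> nat) set \<Rightarrow> vect set \<Rightarrow> vect set \<Rightarrow> bool" where
  "aff_equiv_on I P Q \<longleftrightarrow> (\<exists>(A :: nat \<times> nat \<Rightarrow> nat \<times> nat \<Rightarrow> real) (c :: vect).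
      bij_betw (\<lambda>x. \<lambda>k. (\<Sum>l\<in>I. A k l * x l) + c k) P Q)"

end

theory Submission
  imports Defs
begin


definition lin :: "(nat \<times> nat) set \<Rightarrow> vect \<Rightarrow> vect \<Rightarrow> real" where
  "lin I a y = (\<Sum>k\<in>I. a k * y k)"

lemma lin_comb:
  "lin I a (\<lambda>k. \<Sum>w\<in>W. c w * w k) = (\<Sum>w\<in>W. c w * lin I a w)"
proof -
  have "(\<Sum>k\<in>I. a k * (\<Sum>w\<in>W. c w * w k)) = (\<Sum>k\<in>I. \<Sum>w\<in>W. c w * (a k * w k))"
    by (simp add: sum_distrib_left mult.left_commute)
  also have "\<dots> = (\<Sum>w\<in>W. \<Sum>k\<in>I. c w * (a k * w k))" by (rule sum.swap)
  also have "\<dots> = (\<Sum>w\<in>W. c w * (\<Sum>k\<in>I. a k * w k))" by (simp add: sum_distrib_left)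
  finally show ?thesis unfolding lin_def .
qed

lemma conv_lin_le:
  assumes "finite W" "x \<in> conv_hull_fin W" "\<forall>w\<in>W. lin I a w \<le> b"
  shows "lin I a x \<le> b"
proof -
  obtain c where c: "\<forall>v\<in>W. 0 \<le> c v" "sum c W = 1" "x = (\<lambda>k. \<Sum>v\<in>W. c v * v k)"
    using assms(2) unfolding conv_hull_fin_def by blast
  have "lin I a x = (\<Sum>w\<in>W. c w * lin I a w)" using c(3) lin_comb by simp
  also have "\<dots> \<le> (\<Sum>w\<in>W. c w * b)"
    by (rule sum_mono) (use c(1) assms(3) in \<open>auto intro: mult_left_mono\<close>)
  also have "\<dots> = (\<Sum>w\<in>W. c w) * b" by (simp add: sum_distrib_right)
  also have "\<dots> = b" using c(2) by (simp add: sum_distrib_right[symmetric])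
  finally show ?thesis .
qed

lemma conv_tight:
  assumes "finite W" "\<forall>v\<in>W. 0 \<le> c v" "sum c W = 1" "\<forall>w\<in>W. lin I a w \<le> b"
    "lin I a (\<lambda>k. \<Sum>v\<in>W. c v * v k) = b" "w \<in> W" "c w > 0"
  shows "lin I a w = b"
proof -
  have e1: "(\<Sum>v\<in>W. c v * (b - lin I a v)) = (\<Sum>v\<in>W. c v * b) - (\<Sum>v\<in>W. c v * lin I a v)"
    unfolding right_diff_distrib by (rule sum_subtractf)
  have e2: "(\<Sum>v\<in>W. c v * b) = b" using assms(3) sum_distrib_right[of c W b] by simp
  have e3: "(\<Sum>v\<in>W. c v * lin I a v) = b" using assms(5) lin_comb[of I a c W] by simp
  have s0: "(\<Sum>v\<in>W. c v * (b - lin I a v)) = 0" using e1 e2 e3 by simp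
  have nn: "\<forall>v\<in>W. 0 \<le> c v * (b - lin I a v)"
  proof
    fix v assume "v \<in> W"
    then have "0 \<le> c v" "0 \<le> b - lin I a v" using assms(2,4) by auto
    then show "0 \<le> c v * (b - lin I a v)" by (rule mult_nonneg_nonneg)
  qed
  have "\<forall>v\<in>W. c v * (b - lin I a v) = 0"
    using sum_nonneg_eq_0_iff[OF assms(1), of "\<lambda>v. c v * (b - lin I a v)"] nn s0 by simp
  then have "c w * (b - lin I a w) = 0" using assms(6) by blast
  then have "b - lin I a w = 0" using assms(7) by simp
  then show ?thesis by simp
qed

lemma vert_in_conv:
  assumes "finite W" "w \<in> W" shows "w \<in> conv_hull_fin W"
  unfolding conv_hull_fin_def
proof (intro CollectI exI[of _ "\<lambda>v. if v = w then 1 else 0"] conjI)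
  show "(\<Sum>v\<in>W. if v = w then 1 else 0 :: real) = 1" using assms by simp
  show "w = (\<lambda>k. \<Sum>v\<in>W. (if v = w then 1 else 0) * v k)"
  proof
    fix k show "w k = (\<Sum>v\<in>W. (if v = w then 1 else 0) * v k)"
    proof -
      have "(\<Sum>v\<in>W. (if v = w then 1 else 0) * v k) = (\<Sum>v\<in>W. if v = w then w k else 0)"
        by (intro sum.cong) auto
      then show ?thesis using assms by simp
    qed
  qed
qed auto

lemma conv_group:
  assumes "finite V" "finite W" "g ` V \<subseteq> W" "\<forall>v\<in>V. 0 \<le> c v" "sum c V = 1"
  shows "(\<lambda>k. \<Sum>v\<in>V. c v * g v k) \<in> conv_hull_fin W"
  unfolding conv_hull_fin_def
proof (intro CollectI exI[of _ "\<lambda>w. \<Sum>v\<in>{v. v \<in> V \<and> g v = w}. c v"] conjI ballI)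
  fix w assume "w \<in> W" show "0 \<le> (\<Sum>v\<in>{v. v \<in> V \<and> g v = w}. c v)"
    using assms(4) by (auto intro: sum_nonneg)
next
  show "(\<Sum>w\<in>W. \<Sum>v\<in>{v. v \<in> V \<and> g v = w}. c v) = 1"
    using sum.group[OF assms(1,2,3), of c] assms(5) by simp
next
  show "(\<lambda>k. \<Sum>v\<in>V. c v * g v k) = (\<lambda>k. \<Sum>w\<in>W. (\<Sum>v\<in>{v. v \<in> V \<and> g v = w}. c v) * w k)"
  proof
    fix k
    have "(\<Sum>w\<in>W. (\<Sum>v\<in>{v. v \<in> V \<and> g v = w}. c v) * w k)
        = (\<Sum>w\<in>W. \<Sum>v\<in>{v. v \<in> V \<and> g v = w}. c v * g v k)"
      by (intro sum.cong refl) (auto simp: sum_distrib_right)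
    also have "\<dots> = (\<Sum>v\<in>V. c v * g v k)"
      using sum.group[OF assms(1,2,3), of "\<lambda>v. c v * g v k"] by simp
    finally show "(\<Sum>v\<in>V. c v * g v k) = (\<Sum>w\<in>W. (\<Sum>v\<in>{v. v \<in> V \<and> g v = w}. c v) * w k)" by simp
  qed
qed



definition cyc :: "(nat \<times> nat) set \<Rightarrow> nat \<Rightarrow> nat \<Rightarrow> nat \<Rightarrow> bool" where
  "cyc L a b c \<longleftrightarrow> ((a,b)\<in>L \<and> (b,c)\<in>L) \<or> ((b,c)\<in>L \<and> (c,a)\<in>L) \<or> ((c,a)\<in>L \<and> (a,b)\<in>L)"

definition good :: "nat \<Rightarrow> (nat \<times> nat) set \<Rightarrow> bool" where
  "good n L \<longleftrightarrow> (\<forall>i j. 1 \<le> i \<longrightarrow> i < j \<longrightarrow> j \<le> n \<longrightarrow>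
      (i, n+j) \<in> L \<and> cyc L i j (n+i) \<and> cyc L j (n+i) (n+j))"

lemma four:
  assumes tot: "\<And>x y. x\<in>{ui,uj,wi,wj} \<Longrightarrow> y\<in>{ui,uj,wi,wj} \<Longrightarrow> x\<noteq>y \<Longrightarrow> ((x,y)\<in>L \<longleftrightarrow> (y,x)\<notin>L)"
  and tr: "trans L" and dist: "distinct [ui,uj,wi,wj]"
  and A: "(ui,wj)\<in>L" and B: "cyc L ui uj wi" and C: "cyc L uj wi wj"
  shows "(ui,uj)\<in>L \<longleftrightarrow> ((ui,wi)\<in>L \<or> (wj,uj)\<in>L)"
    and "(wi,wj)\<in>L \<longleftrightarrow> ((wi,ui)\<in>L \<or> (uj,wj)\<in>L)"
    and "(wi,uj)\<in>L \<longleftrightarrow> ((wi,ui)\<in>L \<and> (wj,uj)\<in>L)"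
proof -
  have t: "\<And>x y z. (x,y)\<in>L \<Longrightarrow> (y,z)\<in>L \<Longrightarrow> (x,z)\<in>L" using tr unfolding trans_def by blast
  have r: "\<And>x y. x\<in>{ui,uj,wi,wj} \<Longrightarrow> y\<in>{ui,uj,wi,wj} \<Longrightarrow> x\<noteq>y \<Longrightarrow> ((y,x)\<in>L \<longleftrightarrow> (x,y)\<notin>L)"
    using tot by blast
  have r0: "(uj,ui)\<in>L \<longleftrightarrow> (ui,uj)\<notin>L" using r[of ui uj] dist by simp
  have r1: "(wi,ui)\<in>L \<longleftrightarrow> (ui,wi)\<notin>L" using r[of ui wi] dist by simp
  have r2: "(wj,ui)\<in>L \<longleftrightarrow> (ui,wj)\<notin>L" using r[of ui wj] dist by simp
  have r3: "(wi,uj)\<in>L \<longleftrightarrow> (uj,wi)\<notin>L" using r[of uj wi] dist by simp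
  have r4: "(wj,uj)\<in>L \<longleftrightarrow> (uj,wj)\<notin>L" using r[of uj wj] dist by simp
  have r5: "(wj,wi)\<in>L \<longleftrightarrow> (wi,wj)\<notin>L" using r[of wi wj] dist by simp
  note T = t[of ui uj wi] t[of ui uj wj] t[of ui wi uj] t[of ui wi wj] t[of ui wj uj] t[of ui wj wi] t[of uj ui wi] t[of uj ui wj] t[of uj wi ui] t[of uj wi wj] t[of uj wj ui] t[of uj wj wi] t[of wi ui uj] t[of wi ui wj] t[of wi uj ui] t[of wi uj wj] t[of wi wj ui] t[of wi wj uj] t[of wj ui uj] t[of wj ui wi] t[of wj uj ui] t[of wj uj wi] t[of wj wi ui] t[of wj wi uj]
  show "(ui,uj)\<in>L \<longleftrightarrow> ((ui,wi)\<in>L \<or> (wj,uj)\<in>L)"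
    using A B C T r0 r1 r2 r3 r4 r5 unfolding cyc_def by blast
  show "(wi,wj)\<in>L \<longleftrightarrow> ((wi,ui)\<in>L \<or> (uj,wj)\<in>L)"
    using A B C T r0 r1 r2 r3 r4 r5 unfolding cyc_def by blast
  show "(wi,uj)\<in>L \<longleftrightarrow> ((wi,ui)\<in>L \<and> (wj,uj)\<in>L)"
    using A B C T r0 r1 r2 r3 r4 r5 unfolding cyc_def by blast
qed



definition Yf :: "nat \<Rightarrow> nat set \<Rightarrow> vect" where
 "Yf n S = (\<lambda>(a,b). if 1 \<le> a \<and> a < b \<and> b \<le> n then (if a \<notin> S \<and> b \<in> S then 0 else 1)
   else if n < a \<and> a < b \<and> b \<le> 2*n then (if a-n \<in> S \<and> b-n \<notin> S then 0 else 1)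
   else if 1 \<le> a \<and> a \<le> n \<and> n < b \<and> b \<le> 2*n then
     (if a < b-n then 1 else if a = b-n then (if a \<in> S then 1 else 0) else (if a \<in> S \<or> b-n \<in> S then 1 else 0))
   else 0)"

lemma lo_tot: "lin_order m L \<Longrightarrow> x\<in>{1..m} \<Longrightarrow> y\<in>{1..m} \<Longrightarrow> x\<noteq>y \<Longrightarrow> ((x,y)\<in>L \<longleftrightarrow> (y,x)\<notin>L)"
  unfolding lin_order_def by blast

lemma lo_trans: "lin_order m L \<Longrightarrow> trans L"
  unfolding lin_order_def by blast

lemma lo_mem: "lin_order m L \<Longrightarrow> (x,y)\<in>L \<Longrightarrow> x\<in>{1..m} \<and> y\<in>{1..m} \<and> x\<noteq>y"
  unfolding lin_order_def by blast

lemma four_L: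
  assumes lo: "lin_order (2*n) L" and g: "good n L" and ij: "1 \<le> i" "i < j" "j \<le> n"
  shows "(i,j)\<in>L \<longleftrightarrow> ((i,n+i)\<in>L \<or> (n+j,j)\<in>L)"
    and "(n+i,n+j)\<in>L \<longleftrightarrow> ((n+i,i)\<in>L \<or> (j,n+j)\<in>L)"
    and "(n+i,j)\<in>L \<longleftrightarrow> ((n+i,i)\<in>L \<and> (n+j,j)\<in>L)"
proof -
  have tot: "\<And>x y. x\<in>{i,j,n+i,n+j} \<Longrightarrow> y\<in>{i,j,n+i,n+j} \<Longrightarrow> x\<noteq>y \<Longrightarrow> ((x,y)\<in>L \<longleftrightarrow> (y,x)\<notin>L)"
  proof -
    fix x y assume "x\<in>{i,j,n+i,n+j}" "y\<in>{i,j,n+i,n+j}" "x\<noteq>y"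
    moreover have "{i,j,n+i,n+j} \<subseteq> {1..2*n}" using ij by auto
    ultimately show "((x,y)\<in>L \<longleftrightarrow> (y,x)\<notin>L)" using lo_tot[OF lo] by blast
  qed
  have dist: "distinct [i,j,n+i,n+j]" using ij by auto
  have A: "(i,n+j)\<in>L" and B: "cyc L i j (n+i)" and C: "cyc L j (n+i) (n+j)"
    using g ij unfolding good_def by auto
  show "(i,j)\<in>L \<longleftrightarrow> ((i,n+i)\<in>L \<or> (n+j,j)\<in>L)"
    by (rule four(1)[OF tot lo_trans[OF lo] dist A B C])
  show "(n+i,n+j)\<in>L \<longleftrightarrow> ((n+i,i)\<in>L \<or> (j,n+j)\<in>L)"
    by (rule four(2)[OF tot lo_trans[OF lo] dist A B C])
  show "(n+i,j)\<in>L \<longleftrightarrow> ((n+i,i)\<in>L \<and> (n+j,j)\<in>L)"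
    by (rule four(3)[OF tot lo_trans[OF lo] dist A B C])
qed

lemma char_good:
  assumes lo: "lin_order (2*n) L" and g: "good n L"
  shows "char_vec (2*n) L = Yf n {i\<in>{1..n}. (i,n+i)\<in>L}"
proof
  fix k :: "nat \<times> nat"
  obtain a b :: nat where k: "k = (a,b)" by fastforce
  define S where "S = {i\<in>{1..n}. (i,n+i)\<in>L}"
  have inS: "\<And>i. 1 \<le> i \<Longrightarrow> i \<le> n \<Longrightarrow> i \<in> S \<longleftrightarrow> (i,n+i)\<in>L" unfolding S_def by auto
  have notS: "\<And>i. 1 \<le> i \<Longrightarrow> i \<le> n \<Longrightarrow> i \<notin> S \<longleftrightarrow> (n+i,i)\<in>L"
  proof -
    fix i assume "1 \<le> i" "i \<le> n"
    then have "(n+i,i)\<in>L \<longleftrightarrow> (i,n+i)\<notin>L" using lo_tot[OF lo, of "n+i" i] by auto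
    then show "i \<notin> S \<longleftrightarrow> (n+i,i)\<in>L" using inS \<open>1 \<le> i\<close> \<open>i \<le> n\<close> by blast
  qed
  have cv: "char_vec (2*n) L (a,b) = (if 1 \<le> a \<and> a < b \<and> b \<le> 2*n \<and> (a,b)\<in>L then 1 else 0)"
    unfolding char_vec_def lop_idx_def by auto
  show "char_vec (2*n) L k = Yf n S k"
  proof (cases "1 \<le> a \<and> a < b \<and> b \<le> 2*n")
    case False
    then show ?thesis unfolding k cv Yf_def by auto
  next
    case True
    then have a1: "1 \<le> a" and ab: "a < b" and b2: "b \<le> 2*n" by auto
    consider (uu) "b \<le> n" | (ww) "n < a" | (uw) "a \<le> n" "n < b" by linarith
    then show ?thesis
    proof cases
      case uu
      have "(a,b)\<in>L \<longleftrightarrow> ((a,n+a)\<in>L \<or> (n+b,b)\<in>L)" using four_L(1)[OF lo g a1 ab uu] .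
      moreover have "a \<in> S \<longleftrightarrow> (a,n+a)\<in>L" using inS a1 ab uu by auto
      moreover have "b \<notin> S \<longleftrightarrow> (n+b,b)\<in>L" using notS a1 ab uu by auto
      ultimately show ?thesis unfolding k cv Yf_def using a1 ab uu by auto
    next
      case ww
      define i where "i = a - n"
      define j where "j = b - n"
      have ai: "a = n + i" and bj: "b = n + j" using ww ab unfolding i_def j_def by auto
      have i1: "1 \<le> i" and ij: "i < j" and jn: "j \<le> n" using ww ab b2 ai bj by auto
      have "(n+i,n+j)\<in>L \<longleftrightarrow> ((n+i,i)\<in>L \<or> (j,n+j)\<in>L)" using four_L(2)[OF lo g i1 ij jn] .
      moreover have "i \<notin> S \<longleftrightarrow> (n+i,i)\<in>L" using notS i1 ij jn by auto
      moreover have "j \<in> S \<longleftrightarrow> (j,n+j)\<in>L" using inS i1 ij jn by auto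
      ultimately show ?thesis unfolding k cv Yf_def using ww ab b2 ai bj i1 ij jn by auto
    next
      case uw
      define j where "j = b - n"
      have bj: "b = n + j" using uw unfolding j_def by auto
      have j1: "1 \<le> j" and jn: "j \<le> n" using uw b2 bj by auto
      consider (lt) "a < j" | (eq) "a = j" | (gt) "j < a" by linarith
      then show ?thesis
      proof cases
        case lt
        have "(a, n+j)\<in>L" using g a1 lt jn unfolding good_def by auto
        then show ?thesis unfolding k cv Yf_def using uw a1 b2 bj lt by auto
      next
        case eq
        have "a \<in> S \<longleftrightarrow> (a,n+a)\<in>L" using inS a1 uw by auto
        then show ?thesis unfolding k cv Yf_def using uw a1 b2 bj eq by auto
      next
        case gt
        have f3: "(n+j,a)\<in>L \<longleftrightarrow> ((n+j,j)\<in>L \<and> (n+a,a)\<in>L)" using four_L(3)[OF lo g j1 gt uw(1)] .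
        have "(a,n+j)\<in>L \<longleftrightarrow> (n+j,a)\<notin>L" using lo_tot[OF lo, of a "n+j"] a1 uw b2 bj by auto
        moreover have "j \<notin> S \<longleftrightarrow> (n+j,j)\<in>L" using notS j1 jn by auto
        moreover have "a \<notin> S \<longleftrightarrow> (n+a,a)\<in>L" using notS a1 uw by auto
        ultimately show ?thesis unfolding k cv Yf_def using uw a1 b2 bj gt f3 by auto
      qed
    qed
  qed
qed



definition key :: "nat \<Rightarrow> nat set \<Rightarrow> nat \<Rightarrow> nat" where
  "key n S e = (if e \<le> n then (if e \<in> S then e else n+2*e+1)
                else (if e-n \<in> S then 4*n+(e-n) else n+2*(e-n)))"

definition Lord :: "nat \<Rightarrow> nat set \<Rightarrow> (nat \<times> nat) set" where
  "Lord n S = {(e,f). e\<in>{1..2*n} \<and> f\<in>{1..2*n} \<and> key n S e < key n S f}"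

lemma key_u: "i \<le> n \<Longrightarrow> key n S i = (if i\<in>S then i else n+2*i+1)"
  unfolding key_def by simp

lemma key_w: "1 \<le> i \<Longrightarrow> key n S (n+i) = (if i\<in>S then 4*n+i else n+2*i)"
  unfolding key_def by simp

lemma uw_ne:
  fixes e j n :: nat
  assumes "1 \<le> e" "e \<le> n" "1 \<le> j" "j \<le> n"
  shows "(if a then e else n+2*e+1) \<noteq> (if b then 4*n+j else n+2*j)"
proof (cases a; cases b)
  assume "\<not> a" "\<not> b" then show ?thesis by simp presburger
qed (use assms in auto)

lemma key_inj:
  assumes "e\<in>{1..2*n}" "f\<in>{1..2*n}" "e \<noteq> f" shows "key n S e \<noteq> key n S f"
proof -
  consider "e \<le> n" "f \<le> n" | "e \<le> n" "n < f" | "n < e" "f \<le> n" | "n < e" "n < f" by linarith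
  then show ?thesis
  proof cases
    case 1 then show ?thesis using assms unfolding key_def by (auto split: if_splits)
  next
    case 2
    define j where "j = f - n"
    have j: "f = n + j" "1 \<le> j" "j \<le> n" using 2 assms(2) unfolding j_def by auto
    have kf: "key n S f = (if j\<in>S then 4*n+j else n+2*j)" using key_w[OF j(2)] j(1) by simp
    show ?thesis using 2 j assms unfolding key_u[OF 2(1)] kf by (intro uw_ne) auto
  next
    case 3
    define j where "j = e - n"
    have j: "e = n + j" "1 \<le> j" "j \<le> n" using 3 assms(1) unfolding j_def by auto
    have ke: "key n S e = (if j\<in>S then 4*n+j else n+2*j)" using key_w[OF j(2)] j(1) by simp
    show ?thesis using 3 j assms unfolding key_u[OF 3(2)] ke using uw_ne[of f n j "f \<in> S" "j \<in> S"] by auto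
  next
    case 4 then show ?thesis using assms unfolding key_def by (auto split: if_splits)
  qed
qed

lemma lin_Lord: "lin_order (2*n) (Lord n S)"
  unfolding lin_order_def
proof (intro conjI)
  show "Lord n S \<subseteq> {1..2*n} \<times> {1..2*n}" unfolding Lord_def by auto
  show "\<forall>(i, j)\<in>Lord n S. i \<noteq> j" unfolding Lord_def by auto
  show "\<forall>i\<in>{1..2*n}. \<forall>j\<in>{1..2*n}. i \<noteq> j \<longrightarrow> ((i, j) \<in> Lord n S) = ((j, i) \<notin> Lord n S)"
  proof (intro ballI impI)
    fix i j assume "i\<in>{1..2*n}" "j\<in>{1..2*n}" "i \<noteq> j"
    then have "key n S i \<noteq> key n S j" by (rule key_inj)
    then show "((i, j) \<in> Lord n S) = ((j, i) \<notin> Lord n S)"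
      using \<open>i\<in>{1..2*n}\<close> \<open>j\<in>{1..2*n}\<close> unfolding Lord_def by auto
  qed
  show "trans (Lord n S)" unfolding trans_def Lord_def by auto
qed

lemma good_Lord: "good n (Lord n S)"
  unfolding good_def
proof (intro allI impI)
  fix i j :: nat assume ij: "1 \<le> i" "i < j" "j \<le> n"
  have r: "\<And>x y. (x,y) \<in> Lord n S \<longleftrightarrow> x\<in>{1..2*n} \<and> y\<in>{1..2*n} \<and> key n S x < key n S y"
    unfolding Lord_def by auto
  have ku: "key n S i = (if i\<in>S then i else n+2*i+1)" "key n S j = (if j\<in>S then j else n+2*j+1)"
    using ij key_u[of i n S] key_u[of j n S] by auto
  have kw: "key n S (n+i) = (if i\<in>S then 4*n+i else n+2*i)" "key n S (n+j) = (if j\<in>S then 4*n+j else n+2*j)"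
    using ij key_w[of i n S] key_w[of j n S] by auto
  have rng: "i\<in>{1..2*n}" "j\<in>{1..2*n}" "n+i\<in>{1..2*n}" "n+j\<in>{1..2*n}" using ij by auto
  show "(i, n + j) \<in> Lord n S \<and> cyc (Lord n S) i j (n + i) \<and> cyc (Lord n S) j (n + i) (n + j)"
    unfolding cyc_def r ku kw using rng ij by (cases "i \<in> S"; cases "j \<in> S") auto
qed



lemma Lord_S: "S \<subseteq> {1..n} \<Longrightarrow> {i\<in>{1..n}. (i,n+i) \<in> Lord n S} = S"
proof -
  assume S: "S \<subseteq> {1..n}"
  have "\<And>i. i\<in>{1..n} \<Longrightarrow> (i,n+i) \<in> Lord n S \<longleftrightarrow> i \<in> S"
  proof -
    fix i assume i: "i\<in>{1..n}"
    then have "key n S i = (if i\<in>S then i else n+2*i+1)" "key n S (n+i) = (if i\<in>S then 4*n+i else n+2*i)"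
      using key_u[of i n S] key_w[of i n S] by auto
    then show "(i,n+i) \<in> Lord n S \<longleftrightarrow> i \<in> S" using i unfolding Lord_def by auto
  qed
  then show ?thesis using S by auto
qed

lemma char_Lord: "S \<subseteq> {1..n} \<Longrightarrow> char_vec (2*n) (Lord n S) = Yf n S"
  using char_good[OF lin_Lord good_Lord] Lord_S by metis

definition bqpv :: "nat \<Rightarrow> nat set \<Rightarrow> vect" where
  "bqpv n S = (\<lambda>(i,j). if (i,j) \<in> bqp_idx n \<and> i \<in> S \<and> j \<in> S then 1 else 0)"

lemma finite_bqp_idx: "finite (bqp_idx n)"
proof -
  have "bqp_idx n \<subseteq> {1..n} \<times> {1..n}" unfolding bqp_idx_def by auto
  then show ?thesis by (rule finite_subset) auto
qed

lemma finite_lop_idx: "finite (lop_idx n)"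
proof -
  have "lop_idx n \<subseteq> {1..n} \<times> {1..n}" unfolding lop_idx_def by auto
  then show ?thesis by (rule finite_subset) auto
qed

lemma bqp_vertices_eq: "bqp_vertices n = bqpv n ` Pow {1..n}"
proof
  show "bqpv n ` Pow {1..n} \<subseteq> bqp_vertices n"
  proof
    fix x assume "x \<in> bqpv n ` Pow {1..n}"
    then obtain S where S: "S \<subseteq> {1..n}" "x = bqpv n S" by auto
    show "x \<in> bqp_vertices n" unfolding bqp_vertices_def
    proof (intro CollectI conjI allI impI ballI)
      fix k assume "k \<notin> bqp_idx n" then show "x k = 0" using S unfolding bqpv_def by (cases k) auto
    next
      fix k assume "k \<in> bqp_idx n" then show "x k \<in> {0,1}" using S unfolding bqpv_def by (cases k) auto
    next
      fix i j assume "1 \<le> i" "i < j" "j \<le> n"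
      then show "x (i,j) = x (i,i) * x (j,j)" using S unfolding bqpv_def bqp_idx_def by auto
    qed
  qed
next
  show "bqp_vertices n \<subseteq> bqpv n ` Pow {1..n}"
  proof
    fix x assume x: "x \<in> bqp_vertices n"
    define S where "S = {i\<in>{1..n}. x (i,i) = 1}"
    have "x = bqpv n S"
    proof
      fix k :: "nat \<times> nat"
      obtain a b where k: "k = (a,b)" by fastforce
      show "x k = bqpv n S k"
      proof (cases "k \<in> bqp_idx n")
        case False then show ?thesis using x unfolding bqp_vertices_def bqpv_def k by auto
      next
        case True
        then have ab: "1 \<le> a" "a \<le> b" "b \<le> n" unfolding k bqp_idx_def by auto
        have v01: "\<And>i. 1 \<le> i \<Longrightarrow> i \<le> n \<Longrightarrow> x (i,i) \<in> {0,1}"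
          using x unfolding bqp_vertices_def bqp_idx_def by auto
        show ?thesis
        proof (cases "a = b")
          case True then show ?thesis using v01[of a] ab unfolding bqpv_def k S_def bqp_idx_def by auto
        next
          case False
          then have "x (a,b) = x (a,a) * x (b,b)" using x ab unfolding bqp_vertices_def by auto
          then show ?thesis using v01[of a] v01[of b] ab False unfolding bqpv_def k S_def bqp_idx_def by auto
        qed
      qed
    qed
    moreover have "S \<subseteq> {1..n}" unfolding S_def by auto
    ultimately show "x \<in> bqpv n ` Pow {1..n}" by auto
  qed
qed

definition Amat :: "nat \<Rightarrow> nat \<times> nat \<Rightarrow> nat \<times> nat \<Rightarrow> real" where
 "Amat n = (\<lambda>(a,b) l. if 1 \<le> a \<and> a < b \<and> b \<le> n then (if l=(a,b) then 1 else 0) - (if l=(b,b) then 1 else 0)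
   else if n < a \<and> a < b \<and> b \<le> 2*n then (if l=(a-n,b-n) then 1 else 0) - (if l=(a-n,a-n) then 1 else 0)
   else if 1 \<le> a \<and> a \<le> n \<and> n < b \<and> b \<le> 2*n then
     (if a < b-n then 0 else if a = b-n then (if l=(a,a) then 1 else 0)
      else (if l=(a,a) then 1 else 0) + (if l=(b-n,b-n) then 1 else 0) - (if l=(b-n,a) then 1 else 0))
   else 0)"

definition cvec :: "nat \<Rightarrow> vect" where
 "cvec n = (\<lambda>(a,b). if 1 \<le> a \<and> a < b \<and> b \<le> n then 1
   else if n < a \<and> a < b \<and> b \<le> 2*n then 1
   else if 1 \<le> a \<and> a \<le> n \<and> n < b \<and> b \<le> 2*n \<and> a < b-n then 1 else 0)"

definition Tm :: "nat \<Rightarrow> vect \<Rightarrow> vect" where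
  "Tm n x = (\<lambda>k. (\<Sum>l\<in>bqp_idx n. Amat n k l * x l) + cvec n k)"

lemma sd: "(\<Sum>l\<in>bqp_idx n. (if l = p then 1 else 0) * (x::vect) l) = (if p \<in> bqp_idx n then x p else 0)"
proof -
  have "(\<Sum>l\<in>bqp_idx n. (if l = p then 1 else 0) * x l) = (\<Sum>l\<in>bqp_idx n. if l = p then x p else 0)"
    by (intro sum.cong) auto
  then show ?thesis using finite_bqp_idx by simp
qed

lemma sA2: "p \<in> bqp_idx n \<Longrightarrow> q \<in> bqp_idx n \<Longrightarrow>
  (\<Sum>l\<in>bqp_idx n. ((if l=p then 1 else 0) - (if l=q then 1 else 0)) * (x::vect) l) = x p - x q"
proof -
  assume pq: "p \<in> bqp_idx n" "q \<in> bqp_idx n"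
  have "(\<Sum>l\<in>bqp_idx n. ((if l=p then 1 else 0) - (if l=q then 1 else 0)) * x l)
     = (\<Sum>l\<in>bqp_idx n. (if l=p then 1 else 0) * x l) - (\<Sum>l\<in>bqp_idx n. (if l=q then 1 else 0) * x l)"
    unfolding left_diff_distrib by (rule sum_subtractf)
  then show ?thesis using pq by (simp only: sd) simp
qed

lemma sA3: "p \<in> bqp_idx n \<Longrightarrow> q \<in> bqp_idx n \<Longrightarrow> r \<in> bqp_idx n \<Longrightarrow>
  (\<Sum>l\<in>bqp_idx n. ((if l=p then 1 else 0) + (if l=q then 1 else 0) - (if l=r then 1 else 0)) * (x::vect) l) = x p + x q - x r"
proof -
  assume pq: "p \<in> bqp_idx n" "q \<in> bqp_idx n" "r \<in> bqp_idx n"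
  have "(\<Sum>l\<in>bqp_idx n. ((if l=p then 1 else 0) + (if l=q then 1 else 0) - (if l=r then 1 else 0)) * x l)
     = (\<Sum>l\<in>bqp_idx n. (if l=p then 1 else 0) * x l + (if l=q then 1 else 0) * x l) - (\<Sum>l\<in>bqp_idx n. (if l=r then 1 else 0) * x l)"
    unfolding left_diff_distrib distrib_right by (rule sum_subtractf)
  also have "\<dots> = (\<Sum>l\<in>bqp_idx n. (if l=p then 1 else 0) * x l) + (\<Sum>l\<in>bqp_idx n. (if l=q then 1 else 0) * x l) - (\<Sum>l\<in>bqp_idx n. (if l=r then 1 else 0) * x l)"
    by (simp only: sum.distrib)
  finally show ?thesis using pq by (simp only: sd) simp
qed

lemma Tval: "Tm n x (a,b) =
  (if 1 \<le> a \<and> a < b \<and> b \<le> n then x (a,b) - x (b,b) + 1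
   else if n < a \<and> a < b \<and> b \<le> 2*n then x (a-n,b-n) - x (a-n,a-n) + 1
   else if 1 \<le> a \<and> a \<le> n \<and> n < b \<and> b \<le> 2*n then
     (if a < b-n then 1 else if a = b-n then x (a,a) else x (a,a) + x (b-n,b-n) - x (b-n,a))
   else 0)"
proof -
  have T: "Tm n x (a,b) = (\<Sum>l\<in>bqp_idx n. Amat n (a,b) l * x l) + cvec n (a,b)" unfolding Tm_def by simp
  show ?thesis
  proof (cases "1 \<le> a \<and> a < b \<and> b \<le> n")
    case True
    then have i: "(a,b) \<in> bqp_idx n" "(b,b) \<in> bqp_idx n" unfolding bqp_idx_def by auto
    have A: "Amat n (a,b) = (\<lambda>l. (if l=(a,b) then 1 else 0) - (if l=(b,b) then 1 else 0))"
      using True unfolding Amat_def by simp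
    have c: "cvec n (a,b) = 1" using True unfolding cvec_def by simp
    show ?thesis unfolding T A c sA2[OF i] using True by simp
  next
    case F1: False
    show ?thesis
    proof (cases "n < a \<and> a < b \<and> b \<le> 2*n")
      case True
      then have i: "(a-n,b-n) \<in> bqp_idx n" "(a-n,a-n) \<in> bqp_idx n" unfolding bqp_idx_def by auto
      have A: "Amat n (a,b) = (\<lambda>l. (if l=(a-n,b-n) then 1 else 0) - (if l=(a-n,a-n) then 1 else 0))"
        using True F1 unfolding Amat_def by simp
      have c: "cvec n (a,b) = 1" using True F1 unfolding cvec_def by simp
      show ?thesis unfolding T A c sA2[OF i] using True F1 by simp
    next
      case F2: False
      show ?thesis
      proof (cases "1 \<le> a \<and> a \<le> n \<and> n < b \<and> b \<le> 2*n")
        case True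
        then have i: "(a,a) \<in> bqp_idx n" "(b-n,b-n) \<in> bqp_idx n" unfolding bqp_idx_def by auto
        consider (lt) "a < b - n" | (eq) "a = b - n" | (gt) "b - n < a" by linarith
        then show ?thesis
        proof cases
          case lt
          have A: "Amat n (a,b) = (\<lambda>l. 0)" using True F1 F2 lt unfolding Amat_def by simp
          have c: "cvec n (a,b) = 1" using True F1 F2 lt unfolding cvec_def by simp
          show ?thesis unfolding T A c using True F1 F2 lt by simp
        next
          case eq
          have A: "Amat n (a,b) = (\<lambda>l. if l=(a,a) then 1 else 0)" using True F1 F2 eq unfolding Amat_def by simp
          have c: "cvec n (a,b) = 0" using True F1 F2 eq unfolding cvec_def by simp
          show ?thesis unfolding T A c sd using True F1 F2 eq i by simp
        next
          case gt
          have i3: "(b-n,a) \<in> bqp_idx n" using True gt unfolding bqp_idx_def by auto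
          have A: "Amat n (a,b) = (\<lambda>l. (if l=(a,a) then 1 else 0) + (if l=(b-n,b-n) then 1 else 0) - (if l=(b-n,a) then 1 else 0))"
            using True F1 F2 gt unfolding Amat_def by simp
          have c: "cvec n (a,b) = 0" using True F1 F2 gt unfolding cvec_def by simp
          show ?thesis unfolding T A c sA3[OF i i3] using True F1 F2 gt by simp
        qed
      next
        case False
        have A: "Amat n (a,b) = (\<lambda>l. 0)" by (simp only: Amat_def case_prod_conv if_not_P[OF F1] if_not_P[OF F2] if_not_P[OF False])
        have F3: "\<not> (1 \<le> a \<and> a \<le> n \<and> n < b \<and> b \<le> 2*n \<and> a < b-n)" using False by blast
        have c: "cvec n (a,b) = 0" by (simp only: cvec_def case_prod_conv if_not_P[OF F1] if_not_P[OF F2] if_not_P[OF F3])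
        show ?thesis unfolding T A c if_not_P[OF F1] if_not_P[OF F2] if_not_P[OF False] by simp
      qed
    qed
  qed
qed



lemma T_bqpv:
  assumes S: "S \<subseteq> {1..n}" shows "Tm n (bqpv n S) = Yf n S"
proof
  fix k :: "nat \<times> nat"
  obtain a b :: nat where k: "k = (a,b)" by fastforce
  have bv: "\<And>i j. bqpv n S (i,j) = (if (i,j) \<in> bqp_idx n \<and> i \<in> S \<and> j \<in> S then 1 else 0)"
    unfolding bqpv_def by simp
  have Y: "Yf n S (a,b) = (if 1 \<le> a \<and> a < b \<and> b \<le> n then (if a \<notin> S \<and> b \<in> S then 0 else 1)
   else if n < a \<and> a < b \<and> b \<le> 2*n then (if a-n \<in> S \<and> b-n \<notin> S then 0 else 1)
   else if 1 \<le> a \<and> a \<le> n \<and> n < b \<and> b \<le> 2*n then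
     (if a < b-n then 1 else if a = b-n then (if a \<in> S then 1 else 0) else (if a \<in> S \<or> b-n \<in> S then 1 else 0))
   else 0)" unfolding Yf_def by simp
  have "Tm n (bqpv n S) (a,b) = Yf n S (a,b)"
  proof (cases "1 \<le> a \<and> a < b \<and> b \<le> n")
    case True
    then have "(a,b) \<in> bqp_idx n" "(b,b) \<in> bqp_idx n" unfolding bqp_idx_def by auto
    then show ?thesis unfolding Tval Y bv using True by auto
  next
    case F1: False
    show ?thesis
    proof (cases "n < a \<and> a < b \<and> b \<le> 2*n")
      case True
      then have "(a-n,b-n) \<in> bqp_idx n" "(a-n,a-n) \<in> bqp_idx n" unfolding bqp_idx_def by auto
      then show ?thesis unfolding Tval Y bv using True F1 by auto
    next
      case F2: False
      show ?thesis
      proof (cases "1 \<le> a \<and> a \<le> n \<and> n < b \<and> b \<le> 2*n")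
        case True
        then have i: "(a,a) \<in> bqp_idx n" "(b-n,b-n) \<in> bqp_idx n" unfolding bqp_idx_def by auto
        consider (lt) "a < b - n" | (eq) "a = b - n" | (gt) "b - n < a" by linarith
        then show ?thesis
        proof cases
          case lt then show ?thesis unfolding Tval Y if_not_P[OF F1] if_not_P[OF F2] if_P[OF True] by simp
        next
          case eq then show ?thesis unfolding Tval Y if_not_P[OF F1] if_not_P[OF F2] if_P[OF True] bv using i by simp
        next
          case gt
          have i3: "(b-n,a) \<in> bqp_idx n" using True gt unfolding bqp_idx_def by auto
          have ng: "\<not> a < b - n" "a \<noteq> b - n" using gt by auto
          show ?thesis unfolding Tval Y if_not_P[OF F1] if_not_P[OF F2] if_P[OF True] if_not_P[OF ng(1)] if_not_P[OF ng(2)] bv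
            using i i3 by auto
        qed
      next
        case False
        then show ?thesis unfolding Tval Y if_not_P[OF F1] if_not_P[OF F2] if_not_P[OF False] by simp
      qed
    qed
  qed
  then show "Tm n (bqpv n S) k = Yf n S k" unfolding k .
qed

definition Rc :: "nat \<Rightarrow> vect \<Rightarrow> vect" where
  "Rc n y = (\<lambda>(i,j). if (i,j) \<in> bqp_idx n then (if i = j then y (i,n+i) else y (i,j) - 1 + y (j,n+j)) else 0)"

lemma Rc_T:
  assumes z: "\<forall>k. k \<notin> bqp_idx n \<longrightarrow> x k = 0" shows "Rc n (Tm n x) = x"
proof
  fix k :: "nat \<times> nat"
  obtain i j :: nat where k: "k = (i,j)" by fastforce
  show "Rc n (Tm n x) k = x k"
  proof (cases "k \<in> bqp_idx n")
    case False then show ?thesis using z unfolding Rc_def k by auto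
  next
    case True
    then have ij: "1 \<le> i" "i \<le> j" "j \<le> n" unfolding k bqp_idx_def by auto
    have d: "\<And>p. 1 \<le> p \<Longrightarrow> p \<le> n \<Longrightarrow> Tm n x (p, n+p) = x (p,p)"
    proof -
      fix p :: nat assume p: "1 \<le> p" "p \<le> n"
      have c1: "\<not> (1 \<le> p \<and> p < n+p \<and> n+p \<le> n)" "\<not> (n < p \<and> p < n+p \<and> n+p \<le> 2*n)"
        "1 \<le> p \<and> p \<le> n \<and> n < n+p \<and> n+p \<le> 2*n" "\<not> p < n+p-n" "p = n+p-n" using p by auto
      show "Tm n x (p, n+p) = x (p,p)"
        unfolding Tval if_not_P[OF c1(1)] if_not_P[OF c1(2)] if_P[OF c1(3)] if_not_P[OF c1(4)] if_P[OF c1(5)]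
        by simp
    qed
    show ?thesis
    proof (cases "i = j")
      case True then show ?thesis unfolding Rc_def k using \<open>k \<in> bqp_idx n\<close> d[of i] ij by (simp add: k)
    next
      case False
      then have lt: "1 \<le> i \<and> i < j \<and> j \<le> n" using ij by auto
      have "Tm n x (i,j) = x (i,j) - x (j,j) + 1" unfolding Tval if_P[OF lt] ..
      then show ?thesis unfolding Rc_def k using \<open>k \<in> bqp_idx n\<close> d[of j] ij False by (simp add: k)
    qed
  qed
qed

lemma BQP_zero: "x \<in> BQP n \<Longrightarrow> k \<notin> bqp_idx n \<Longrightarrow> x k = 0"
proof -
  assume x: "x \<in> BQP n" and k: "k \<notin> bqp_idx n"
  obtain c where c: "x = (\<lambda>k. \<Sum>v\<in>bqp_vertices n. c v * v k)"
    using x unfolding BQP_def conv_hull_fin_def by blast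
  have "\<forall>v\<in>bqp_vertices n. c v * v k = 0" using k unfolding bqp_vertices_def by (cases k) auto
  then have "(\<Sum>v\<in>bqp_vertices n. c v * v k) = 0" by (intro sum.neutral) blast
  then show ?thesis unfolding c by simp
qed

definition crd :: "nat \<times> nat \<Rightarrow> vect" where "crd p = (\<lambda>k. if k = p then 1 else 0)"
definition tri :: "nat \<Rightarrow> nat \<Rightarrow> nat \<Rightarrow> vect" where
  "tri a b c = (\<lambda>k. (if k = (a,b) then 1 else 0) + (if k = (b,c) then 1 else 0) - (if k = (a,c) then 1 else 0))"

lemma sdl: "(\<Sum>l\<in>lop_idx m. (if l = p then 1 else 0) * (y::vect) l) = (if p \<in> lop_idx m then y p else 0)"
proof -
  have "(\<Sum>l\<in>lop_idx m. (if l = p then 1 else 0) * y l) = (\<Sum>l\<in>lop_idx m. if l = p then y p else 0)"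
    by (intro sum.cong) auto
  then show ?thesis using finite_lop_idx by simp
qed

lemma lin_crd: "p \<in> lop_idx m \<Longrightarrow> lin (lop_idx m) (crd p) y = y p"
  unfolding lin_def crd_def by (simp add: sdl)

lemma lin_tri: "(a,b) \<in> lop_idx m \<Longrightarrow> (b,c) \<in> lop_idx m \<Longrightarrow> (a,c) \<in> lop_idx m \<Longrightarrow>
   lin (lop_idx m) (tri a b c) y = y (a,b) + y (b,c) - y (a,c)"
proof -
  assume i: "(a,b) \<in> lop_idx m" "(b,c) \<in> lop_idx m" "(a,c) \<in> lop_idx m"
  have "lin (lop_idx m) (tri a b c) y = (\<Sum>l\<in>lop_idx m. (if l=(a,b) then 1 else 0) * y l + (if l=(b,c) then 1 else 0) * y l) - (\<Sum>l\<in>lop_idx m. (if l=(a,c) then 1 else 0) * y l)"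
    unfolding lin_def tri_def left_diff_distrib distrib_right by (rule sum_subtractf)
  also have "\<dots> = (\<Sum>l\<in>lop_idx m. (if l=(a,b) then 1 else 0) * y l) + (\<Sum>l\<in>lop_idx m. (if l=(b,c) then 1 else 0) * y l) - (\<Sum>l\<in>lop_idx m. (if l=(a,c) then 1 else 0) * y l)"
    by (simp only: sum.distrib)
  finally show ?thesis using i by (simp only: sdl) simp
qed

lemma char_in: "p \<in> lop_idx m \<Longrightarrow> char_vec m L p = (if p \<in> L then 1 else 0)"
  unfolding char_vec_def by simp

lemma char_tri:
  assumes lo: "lin_order m L" and abc: "1 \<le> a" "a < b" "b < c" "c \<le> m"
  shows "char_vec m L (a,b) + char_vec m L (b,c) - char_vec m L (a,c) \<le> 1"
    and "char_vec m L (a,b) + char_vec m L (b,c) - char_vec m L (a,c) = 1 \<longleftrightarrow> cyc L a b c"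
proof -
  have i: "(a,b) \<in> lop_idx m" "(b,c) \<in> lop_idx m" "(a,c) \<in> lop_idx m" using abc unfolding lop_idx_def by auto
  have t: "(a,b)\<in>L \<Longrightarrow> (b,c)\<in>L \<Longrightarrow> (a,c)\<in>L" using lo_trans[OF lo] unfolding trans_def by blast
  have rab: "(b,a)\<in>L \<longleftrightarrow> (a,b)\<notin>L" using lo_tot[OF lo, of b a] abc by auto
  have rbc: "(c,b)\<in>L \<longleftrightarrow> (b,c)\<notin>L" using lo_tot[OF lo, of c b] abc by auto
  have rac: "(c,a)\<in>L \<longleftrightarrow> (a,c)\<notin>L" using lo_tot[OF lo, of c a] abc by auto
  have t2: "(c,b)\<in>L \<Longrightarrow> (b,a)\<in>L \<Longrightarrow> (c,a)\<in>L" using lo_trans[OF lo] unfolding trans_def by blast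
  have nn: "(a,b)\<notin>L \<Longrightarrow> (b,c)\<notin>L \<Longrightarrow> (a,c)\<notin>L" using t2 rab rbc rac by blast
  show "char_vec m L (a,b) + char_vec m L (b,c) - char_vec m L (a,c) \<le> 1"
    unfolding char_in[OF i(1)] char_in[OF i(2)] char_in[OF i(3)] using t nn by auto
  show "char_vec m L (a,b) + char_vec m L (b,c) - char_vec m L (a,c) = 1 \<longleftrightarrow> cyc L a b c"
    unfolding char_in[OF i(1)] char_in[OF i(2)] char_in[OF i(3)] cyc_def rac using t nn by auto
qed

definition Pn :: "nat \<Rightarrow> (nat \<times> nat) set" where "Pn n = {(i,j). 1 \<le> i \<and> i < j \<and> j \<le> n}"

definition Hs :: "nat \<Rightarrow> (vect \<times> real) set" where
  "Hs n = insert (\<lambda>_. 0, 0) ((\<lambda>(i,j). (crd (i,n+j), 1)) ` Pn n \<union> (\<lambda>(i,j). (tri i j (n+i), 1)) ` Pn n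
      \<union> (\<lambda>(i,j). (tri j (n+i) (n+j), 1)) ` Pn n)"

lemma finite_Pn: "finite (Pn n)"
proof -
  have "Pn n \<subseteq> {1..n} \<times> {1..n}" unfolding Pn_def by auto
  then show ?thesis by (rule finite_subset) auto
qed

lemma finite_Hs: "finite (Hs n)" unfolding Hs_def using finite_Pn by simp

lemma Hs_cases:
  assumes "(a,b) \<in> Hs n"
  obtains "a = (\<lambda>_. 0)" "b = 0"
   | i j where "1 \<le> i" "i < j" "j \<le> n" "a = crd (i,n+j)" "b = 1"
   | i j where "1 \<le> i" "i < j" "j \<le> n" "a = tri i j (n+i)" "b = 1"
   | i j where "1 \<le> i" "i < j" "j \<le> n" "a = tri j (n+i) (n+j)" "b = 1"
  using assms unfolding Hs_def Pn_def by auto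

lemma lin_zero: "lin I (\<lambda>_. 0) y = 0" unfolding lin_def by simp

lemma Hs_char:
  assumes lo: "lin_order (2*n) L" and h: "(a,b) \<in> Hs n"
  shows "lin (lop_idx (2*n)) a (char_vec (2*n) L) \<le> b"
proof -
  have ip: "\<And>p q. 1 \<le> p \<Longrightarrow> p < q \<Longrightarrow> q \<le> 2*n \<Longrightarrow> (p,q) \<in> lop_idx (2*n)" unfolding lop_idx_def by auto
  show ?thesis using h
  proof (cases rule: Hs_cases)
    case 1 then show ?thesis by (simp add: lin_zero)
  next
    case (2 i j)
    then have "(i,n+j) \<in> lop_idx (2*n)" by (intro ip) auto
    then show ?thesis unfolding 2 lin_crd[OF \<open>(i,n+j) \<in> lop_idx (2*n)\<close>] char_vec_def by auto
  next
    case (3 i j)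
    then show ?thesis using char_tri(1)[OF lo, of i j "n+i"] lin_tri[OF ip ip ip, of i j "n+i"] by auto
  next
    case (4 i j)
    then show ?thesis using char_tri(1)[OF lo, of j "n+i" "n+j"] lin_tri[OF ip ip ip, of j "n+i" "n+j"] by auto
  qed
qed

lemma Hs_good:
  assumes lo: "lin_order (2*n) L"
  shows "(\<forall>(a,b)\<in>Hs n. lin (lop_idx (2*n)) a (char_vec (2*n) L) = b) \<longleftrightarrow> good n L"
proof -
  have ip: "\<And>p q. 1 \<le> p \<Longrightarrow> p < q \<Longrightarrow> q \<le> 2*n \<Longrightarrow> (p,q) \<in> lop_idx (2*n)" unfolding lop_idx_def by auto
  have e1: "\<And>i j. 1 \<le> i \<Longrightarrow> i < j \<Longrightarrow> j \<le> n \<Longrightarrow>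
     lin (lop_idx (2*n)) (crd (i,n+j)) (char_vec (2*n) L) = 1 \<longleftrightarrow> (i,n+j) \<in> L"
  proof -
    fix i j :: nat assume "1 \<le> i" "i < j" "j \<le> n"
    then have "(i,n+j) \<in> lop_idx (2*n)" by (intro ip) auto
    then show "lin (lop_idx (2*n)) (crd (i,n+j)) (char_vec (2*n) L) = 1 \<longleftrightarrow> (i,n+j) \<in> L"
      unfolding lin_crd[OF \<open>(i,n+j) \<in> lop_idx (2*n)\<close>] char_in[OF \<open>(i,n+j) \<in> lop_idx (2*n)\<close>] by simp
  qed
  have e2: "\<And>i j. 1 \<le> i \<Longrightarrow> i < j \<Longrightarrow> j \<le> n \<Longrightarrow>
     lin (lop_idx (2*n)) (tri i j (n+i)) (char_vec (2*n) L) = 1 \<longleftrightarrow> cyc L i j (n+i)"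
  proof -
    fix i j :: nat assume a: "1 \<le> i" "i < j" "j \<le> n"
    have "lin (lop_idx (2*n)) (tri i j (n+i)) (char_vec (2*n) L) =
      char_vec (2*n) L (i,j) + char_vec (2*n) L (j,n+i) - char_vec (2*n) L (i,n+i)"
      by (rule lin_tri) (use a in \<open>auto intro!: ip\<close>)
    then show "lin (lop_idx (2*n)) (tri i j (n+i)) (char_vec (2*n) L) = 1 \<longleftrightarrow> cyc L i j (n+i)"
      using char_tri(2)[OF lo, of i j "n+i"] a by auto
  qed
  have e3: "\<And>i j. 1 \<le> i \<Longrightarrow> i < j \<Longrightarrow> j \<le> n \<Longrightarrow>
     lin (lop_idx (2*n)) (tri j (n+i) (n+j)) (char_vec (2*n) L) = 1 \<longleftrightarrow> cyc L j (n+i) (n+j)"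
  proof -
    fix i j :: nat assume a: "1 \<le> i" "i < j" "j \<le> n"
    have "lin (lop_idx (2*n)) (tri j (n+i) (n+j)) (char_vec (2*n) L) =
      char_vec (2*n) L (j,n+i) + char_vec (2*n) L (n+i,n+j) - char_vec (2*n) L (j,n+j)"
      by (rule lin_tri) (use a in \<open>auto intro!: ip\<close>)
    then show "lin (lop_idx (2*n)) (tri j (n+i) (n+j)) (char_vec (2*n) L) = 1 \<longleftrightarrow> cyc L j (n+i) (n+j)"
      using char_tri(2)[OF lo, of j "n+i" "n+j"] a by auto
  qed
  show ?thesis
  proof
    assume H: "\<forall>(a,b)\<in>Hs n. lin (lop_idx (2*n)) a (char_vec (2*n) L) = b"
    show "good n L" unfolding good_def
    proof (intro allI impI conjI)
      fix i j :: nat assume a: "1 \<le> i" "i < j" "j \<le> n"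
      then have p: "(i,j) \<in> Pn n" unfolding Pn_def by auto
      have "(crd (i,n+j), 1) \<in> Hs n" "(tri i j (n+i), 1) \<in> Hs n" "(tri j (n+i) (n+j), 1) \<in> Hs n"
        using p unfolding Hs_def by auto
      then show "(i,n+j) \<in> L" "cyc L i j (n+i)" "cyc L j (n+i) (n+j)"
        using H e1[OF a] e2[OF a] e3[OF a] by auto
    qed
  next
    assume g: "good n L"
    show "\<forall>(a,b)\<in>Hs n. lin (lop_idx (2*n)) a (char_vec (2*n) L) = b"
    proof (intro ballI)
      fix h assume "h \<in> Hs n"
      obtain a b where h: "h = (a,b)" by fastforce
      have "lin (lop_idx (2*n)) a (char_vec (2*n) L) = b" using \<open>h \<in> Hs n\<close>[unfolded h]
      proof (cases rule: Hs_cases)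
        case 1 then show ?thesis by (simp add: lin_zero)
      next
        case (2 i j) then show ?thesis using e1[of i j] g unfolding good_def by auto
      next
        case (3 i j) then show ?thesis using e2[of i j] g unfolding good_def by auto
      next
        case (4 i j) then show ?thesis using e3[of i j] g unfolding good_def by auto
      qed
      then show "case h of (a,b) \<Rightarrow> lin (lop_idx (2*n)) a (char_vec (2*n) L) = b" unfolding h by simp
    qed
  qed
qed



lemma lin_comb2:
  "lin I a (\<lambda>k. \<Sum>v\<in>V. c v * g v k) = (\<Sum>v\<in>V. c v * lin I a (g v))"
proof -
  have "(\<Sum>k\<in>I. a k * (\<Sum>v\<in>V. c v * g v k)) = (\<Sum>k\<in>I. \<Sum>v\<in>V. c v * (a k * g v k))"
    by (simp add: sum_distrib_left mult.left_commute)
  also have "\<dots> = (\<Sum>v\<in>V. \<Sum>k\<in>I. c v * (a k * g v k))" by (rule sum.swap)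
  also have "\<dots> = (\<Sum>v\<in>V. c v * (\<Sum>k\<in>I. a k * g v k))" by (simp add: sum_distrib_left)
  finally show ?thesis unfolding lin_def .
qed

lemma finite_W: "finite (lop_vertices m)"
proof -
  have "{L. lin_order m L} \<subseteq> Pow ({1..m} \<times> {1..m})" unfolding lin_order_def by auto
  then have "finite {L. lin_order m L}" by (rule finite_subset) auto
  then show ?thesis unfolding lop_vertices_def by simp
qed

lemma finite_V: "finite (bqp_vertices n)" unfolding bqp_vertices_eq by simp

lemma V_props:
  assumes "v \<in> bqp_vertices n"
  shows "Tm n v \<in> lop_vertices (2*n)" and "\<forall>(a,b)\<in>Hs n. lin (lop_idx (2*n)) a (Tm n v) = b"
proof -
  obtain S where S: "S \<subseteq> {1..n}" "v = bqpv n S" using assms unfolding bqp_vertices_eq by auto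
  have e: "Tm n v = char_vec (2*n) (Lord n S)" using T_bqpv[OF S(1)] char_Lord[OF S(1)] S(2) by simp
  show "Tm n v \<in> lop_vertices (2*n)" unfolding e lop_vertices_def using lin_Lord by auto
  show "\<forall>(a,b)\<in>Hs n. lin (lop_idx (2*n)) a (Tm n v) = b" unfolding e
    by (subst Hs_good[OF lin_Lord]) (rule good_Lord)
qed

lemma V_zero: "v \<in> bqp_vertices n \<Longrightarrow> \<forall>k. k \<notin> bqp_idx n \<longrightarrow> v k = 0"
  unfolding bqp_vertices_def by auto

lemma Tm_comb:
  assumes "sum c V = 1"
  shows "Tm n (\<lambda>k. \<Sum>v\<in>V. c v * v k) = (\<lambda>k. \<Sum>v\<in>V. c v * Tm n v k)"
proof
  fix k
  have "(\<Sum>l\<in>bqp_idx n. Amat n k l * (\<Sum>v\<in>V. c v * v l)) = (\<Sum>v\<in>V. c v * (\<Sum>l\<in>bqp_idx n. Amat n k l * v l))"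
    using lin_comb[of "bqp_idx n" "Amat n k" c V] unfolding lin_def .
  moreover have "cvec n k = (\<Sum>v\<in>V. c v * cvec n k)" using assms by (simp add: sum_distrib_right[symmetric])
  ultimately show "Tm n (\<lambda>k. \<Sum>v\<in>V. c v * v k) k = (\<Sum>v\<in>V. c v * Tm n v k)"
    unfolding Tm_def by (simp add: distrib_left sum.distrib)
qed

theorem theorem1:
  fixes n :: nat
  shows "\<exists>F. is_face_on (lop_idx (2 * n)) (LOP (2 * n)) F \<and> aff_equiv_on (bqp_idx n) (BQP n) F"
proof -
  define I where "I = lop_idx (2*n)"
  define W where "W = lop_vertices (2*n)"
  define V where "V = bqp_vertices n"
  define F where "F = LOP (2*n) \<inter> (\<Inter>(a, b)\<in>Hs n. hyperplane_on I a b)"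
  have fW: "finite W" unfolding W_def by (rule finite_W)
  have fV: "finite V" unfolding V_def by (rule finite_V)
  have WV: "Tm n ` V \<subseteq> W" using V_props(1) unfolding V_def W_def by auto
  have Vt: "\<And>v a b. v \<in> V \<Longrightarrow> (a,b) \<in> Hs n \<Longrightarrow> lin I a (Tm n v) = b"
  proof -
    fix v a b assume v: "v \<in> V" and ab: "(a,b) \<in> Hs n"
    have "\<forall>(a,b)\<in>Hs n. lin (lop_idx (2*n)) a (Tm n v) = b" using v unfolding V_def by (rule V_props(2))
    then have "case (a,b) of (a,b) \<Rightarrow> lin (lop_idx (2*n)) a (Tm n v) = b" using ab by (rule bspec)
    then show "lin I a (Tm n v) = b" unfolding I_def by simp
  qed
  have Wle: "\<And>w a b. w \<in> W \<Longrightarrow> (a,b) \<in> Hs n \<Longrightarrow> lin I a w \<le> b"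
    using Hs_char unfolding W_def I_def lop_vertices_def by blast
  have LOPW: "LOP (2*n) = conv_hull_fin W" unfolding LOP_def W_def ..
  have BQPV: "BQP n = conv_hull_fin V" unfolding BQP_def V_def ..
  have hyp: "\<And>a b y. y \<in> hyperplane_on I a b \<longleftrightarrow> lin I a y = b" unfolding hyperplane_on_def lin_def by simp
  have face: "is_face_on I (LOP (2*n)) F"
    unfolding is_face_on_def
  proof (intro exI[of _ "Hs n"] conjI)
    show "finite (Hs n)" by (rule finite_Hs)
    show "Hs n \<noteq> {}" unfolding Hs_def by simp
    show "F = LOP (2*n) \<inter> (\<Inter>(a, b)\<in>Hs n. hyperplane_on I a b)" unfolding F_def ..
    show "\<forall>(a, b)\<in>Hs n. supporting_on I (LOP (2*n)) a b"
    proof (intro ballI)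
      fix h assume h: "h \<in> Hs n"
      obtain a b where ab: "h = (a,b)" by fastforce
      have v0: "bqpv n {} \<in> V" unfolding V_def bqp_vertices_eq by auto
      have w0: "Tm n (bqpv n {}) \<in> LOP (2*n)" unfolding LOPW using vert_in_conv[OF fW] WV v0 by auto
      have "Tm n (bqpv n {}) \<in> hyperplane_on I a b" unfolding hyp using Vt[OF v0] h ab by auto
      then have ne: "LOP (2*n) \<inter> hyperplane_on I a b \<noteq> {}" using w0 by auto
      have le: "\<forall>x\<in>LOP (2*n). (\<Sum>k\<in>I. a k * x k) \<le> b"
      proof
        fix x assume "x \<in> LOP (2*n)"
        then have "lin I a x \<le> b" using conv_lin_le[OF fW, of x I a b] Wle h ab unfolding LOPW by auto
        then show "(\<Sum>k\<in>I. a k * x k) \<le> b" unfolding lin_def .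
      qed
      show "case h of (a, b) \<Rightarrow> supporting_on I (LOP (2*n)) a b"
        unfolding ab supporting_on_def using ne le by auto
    qed
  qed
  have injV: "inj_on (Tm n) V"
  proof
    fix x y assume "x \<in> V" "y \<in> V" "Tm n x = Tm n y"
    then show "x = y" using Rc_T[OF V_zero[of x n]] Rc_T[OF V_zero[of y n]] unfolding V_def by metis
  qed
  have bij: "bij_betw (Tm n) (BQP n) F"
    unfolding bij_betw_def
  proof (intro conjI)
    show "inj_on (Tm n) (BQP n)"
    proof
      fix x y assume "x \<in> BQP n" "y \<in> BQP n" "Tm n x = Tm n y"
      then show "x = y" using Rc_T[of n x] Rc_T[of n y] BQP_zero by metis
    qed
    show "Tm n ` BQP n = F"
    proof
      show "Tm n ` BQP n \<subseteq> F"
      proof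
        fix z assume "z \<in> Tm n ` BQP n"
        then obtain x where x: "x \<in> BQP n" "z = Tm n x" by auto
        obtain c where c: "\<forall>v\<in>V. 0 \<le> c v" "sum c V = 1" "x = (\<lambda>k. \<Sum>v\<in>V. c v * v k)"
          using x(1) unfolding BQPV conv_hull_fin_def by blast
        have z: "z = (\<lambda>k. \<Sum>v\<in>V. c v * Tm n v k)" using x(2) c(3) Tm_comb[OF c(2)] by simp
        have "z \<in> LOP (2*n)" unfolding z LOPW by (rule conv_group[OF fV fW WV c(1) c(2)])
        moreover have "z \<in> (\<Inter>(a, b)\<in>Hs n. hyperplane_on I a b)"
        proof (intro INT_I)
          fix h assume h: "h \<in> Hs n"
          obtain a b where ab: "h = (a,b)" by fastforce
          have "lin I a z = (\<Sum>v\<in>V. c v * lin I a (Tm n v))" unfolding z by (rule lin_comb2)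
          also have "\<dots> = (\<Sum>v\<in>V. c v * b)" using Vt h ab by auto
          also have "\<dots> = b" using c(2) by (simp add: sum_distrib_right[symmetric])
          finally show "z \<in> (case h of (a, b) \<Rightarrow> hyperplane_on I a b)" unfolding ab using hyp by simp
        qed
        ultimately show "z \<in> F" unfolding F_def by blast
      qed
    next
      show "F \<subseteq> Tm n ` BQP n"
      proof
        fix y assume yF: "y \<in> F"
        then obtain d where d: "\<forall>w\<in>W. 0 \<le> d w" "sum d W = 1" "y = (\<lambda>k. \<Sum>w\<in>W. d w * w k)"
          unfolding F_def LOPW conv_hull_fin_def by blast
        have yI: "y \<in> (\<Inter>(a, b)\<in>Hs n. hyperplane_on I a b)" using yF unfolding F_def by (rule IntD2)
        have yt: "\<And>a b. (a,b) \<in> Hs n \<Longrightarrow> lin I a y = b"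
        proof -
          fix a b assume ab: "(a,b) \<in> Hs n"
          have "y \<in> (case (a,b) of (a,b) \<Rightarrow> hyperplane_on I a b)" using yI ab by (rule INT_D)
          then show "lin I a y = b" using hyp by simp
        qed
        have pos: "\<And>w. w \<in> W \<Longrightarrow> d w > 0 \<Longrightarrow> w \<in> Tm n ` V"
        proof -
          fix w assume w: "w \<in> W" "d w > 0"
          have t: "\<forall>(a,b)\<in>Hs n. lin I a w = b"
          proof (intro ballI)
            fix h assume h: "h \<in> Hs n"
            obtain a b where ab: "h = (a,b)" by fastforce
            have hab: "(a,b) \<in> Hs n" using h ab by simp
            have w1: "\<forall>w\<in>W. lin I a w \<le> b" using Wle[OF _ hab] by blast
            have w2: "lin I a (\<lambda>k. \<Sum>v\<in>W. d v * v k) = b" using yt[OF hab] d(3) by simp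
            have "lin I a w = b"
              by (rule conv_tight[OF fW d(1) d(2) w1 w2 w(1) w(2)])
            then show "case h of (a,b) \<Rightarrow> lin I a w = b" unfolding ab by simp
          qed
          obtain L where L: "lin_order (2*n) L" "w = char_vec (2*n) L" using w(1) unfolding W_def lop_vertices_def by auto
          have t2: "\<forall>(a,b)\<in>Hs n. lin (lop_idx (2*n)) a (char_vec (2*n) L) = b" using t unfolding L(2) I_def .
          have g: "good n L" using iffD1[OF Hs_good[OF L(1)] t2] .
          define S where "S = {i\<in>{1..n}. (i,n+i)\<in>L}"
          have S: "S \<subseteq> {1..n}" unfolding S_def by auto
          have "w = Tm n (bqpv n S)" using char_good[OF L(1) g] T_bqpv[OF S] L(2) unfolding S_def by simp
          moreover have "bqpv n S \<in> V" unfolding V_def bqp_vertices_eq using S by auto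
          ultimately show "w \<in> Tm n ` V" by auto
        qed
        have zero: "\<forall>w\<in>W - Tm n ` V. d w = 0" using pos d(1) by force
        define c where "c = (\<lambda>v. d (Tm n v))"
        have re: "\<And>f. (\<Sum>v\<in>V. c v * f (Tm n v)) = (\<Sum>w\<in>W. d w * f w)"
        proof -
          fix f :: "vect \<Rightarrow> real"
          have "(\<Sum>v\<in>V. c v * f (Tm n v)) = (\<Sum>w\<in>Tm n ` V. d w * f w)"
            unfolding c_def using sum.reindex[OF injV, of "\<lambda>w. d w * f w"] by simp
          also have "\<dots> = (\<Sum>w\<in>W. d w * f w)"
            by (rule sum.mono_neutral_left[OF fW WV]) (use zero in auto)
          finally show "(\<Sum>v\<in>V. c v * f (Tm n v)) = (\<Sum>w\<in>W. d w * f w)" .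
        qed
        have c1: "sum c V = 1" using re[of "\<lambda>_. 1"] d(2) by simp
        have c0: "\<forall>v\<in>V. 0 \<le> c v" unfolding c_def using d(1) WV by auto
        define x where "x = (\<lambda>k. \<Sum>v\<in>V. c v * v k)"
        have "x \<in> BQP n" unfolding BQPV conv_hull_fin_def x_def using c0 c1 by blast
        moreover have "Tm n x = y"
        proof
          fix k
          have "Tm n x k = (\<Sum>v\<in>V. c v * Tm n v k)" unfolding x_def Tm_comb[OF c1] ..
          also have "\<dots> = (\<Sum>w\<in>W. d w * w k)" using re[of "\<lambda>w. w k"] .
          finally show "Tm n x k = y k" unfolding d(3) by simp
        qed
        ultimately show "y \<in> Tm n ` BQP n" by auto
      qed
    qed
  qed
  have "aff_equiv_on (bqp_idx n) (BQP n) F"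
    unfolding aff_equiv_on_def
    by (intro exI[of _ "Amat n"] exI[of _ "cvec n"]) (use bij in \<open>simp add: Tm_def[abs_def]\<close>)
  then show ?thesis using face unfolding I_def by blast
qed


end
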